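(* Let $g:\mathbb{R}\to[0,+\infty)$ be lower semicontinuous and assume there are $a_1>0$, $a_2\in\mathbb{R}$ with $g(\delta)\ge a_1|\delta|+a_2$ for all $\delta\in\mathbb{R}$. Let $f:\mathbb{R}^{N\times N}\to[0,+\infty)$, $f(\xi)=g(\det\xi)$. If $f$ is ${\rm curl}$-$\infty$ quasiconvex, then $g$ is level convex; hence $f$ is polyquasiconvex.
   Context: $Q:=(-\tfrac12,\tfrac12)^N$. A non-negative Borel $f:\mathbb{R}^{N\times N}\to[0,\infty)$ is ${\rm curl}$-$\infty$ quasiconvex if $f(\xi)=\lim_{p\to\infty}\inf\{(\int_Qf^p(\xi+Du(x))dx)^{1/p}:u\in W^{1,\infty}_{\rm per}(Q;\mathbb{R}^N)\}$ for every $\xi$, with $W^{1,\infty}_{\rm per}$ the $Q$-periodic functions in $W^{1,\infty}(\mathbb{R}^N;\mathbb{R}^N)$. Level convex: $g(\lambda s+(1-\lambda)t)\le\max\{g(s),g(t)\}$. Polyquasiconvex: $f=h\circ T$ with $h$ level convex and $T(\xi)$ the vector of all minors of $\xi$. *)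

theory Defs
  imports "HOL-Analysis.Analysis"
begin

definition lsc :: "(real \<Rightarrow> real) \<Rightarrow> bool" where
  "lsc g \<longleftrightarrow> (\<forall>x c. c < g x \<longrightarrow> (\<forall>\<^sub>F y in at x. c < g y))"

definition level_convex_real :: "(real \<Rightarrow> real) \<Rightarrow> bool" where
  "level_convex_real g \<longleftrightarrow>
     (\<forall>s t l. 0 \<le> l \<and> l \<le> 1 \<longrightarrow> g (l * s + (1 - l) * t) \<le> max (g s) (g t))"

definition Qcube :: "(real^'n) set" where
  "Qcube = {x. \<forall>i. - 1/2 < x $ i \<and> x $ i < 1/2}"

text \<open>Q-periodic W^{1,infinity} maps: bounded, Lipschitz, 1-periodic in every coordinate.\<close>
definition W1inf_per :: "((real^'n) \<Rightarrow> (real^'n)) set" where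
  "W1inf_per = {u. bounded (range u) \<and> (\<exists>L. L-lipschitz_on UNIV u)
                  \<and> (\<forall>x i. u (x + axis i 1) = u x)}"

text \<open>Gradient (Jacobian matrix, (Du)_{ij} = d u_i / d x_j), defined a.e. by Rademacher.\<close>
definition Dmat :: "((real^'n) \<Rightarrow> (real^'n)) \<Rightarrow> real^'n \<Rightarrow> real^'n^'n" where
  "Dmat u x = matrix (frechet_derivative u (at x))"

definition Lp_term :: "real \<Rightarrow> (real^'n^'n \<Rightarrow> real) \<Rightarrow> real^'n^'n \<Rightarrow> ((real^'n) \<Rightarrow> (real^'n)) \<Rightarrow> ennreal" where
  "Lp_term p f \<xi> u =
     (let I = (\<integral>\<^sup>+ x \<in> Qcube. ennreal (f (\<xi> + Dmat u x) powr p) \<partial>lborel)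
      in if I = \<infinity> then \<infinity> else ennreal (enn2real I powr (1 / p)))"

definition curl_inf_qc :: "(real^'n^'n \<Rightarrow> real) \<Rightarrow> bool" where
  "curl_inf_qc f \<longleftrightarrow>
     (\<forall>\<xi>. ((\<lambda>p. INF u \<in> W1inf_per. Lp_term p f \<xi> u) \<longlongrightarrow> ennreal (f \<xi>)) at_top)"

text \<open>Minors: for I, J index sets of equal positive cardinality, the determinant of the
  submatrix with rows I, columns J (both in increasing order), via the Leibniz formula.\<close>
definition inversions :: "('n::{finite,linorder} \<Rightarrow> 'n) \<Rightarrow> 'n set \<Rightarrow> nat" where
  "inversions \<sigma> I = card {(i, i'). i \<in> I \<and> i' \<in> I \<and> i < i' \<and> \<sigma> i' < \<sigma> i}"

definition minor :: "((real, 'n::{finite,linorder}) vec, 'n) vec \<Rightarrow> 'n set \<Rightarrow> 'n set \<Rightarrow> real" where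
  "minor \<xi> I J = (\<Sum>\<sigma> \<in> {\<sigma>. bij_betw \<sigma> I J \<and> \<sigma> \<in> extensional I}.
                      (- 1) ^ inversions \<sigma> I * (\<Prod>i\<in>I. \<xi> $ i $ \<sigma> i))"

text \<open>T(xi): vector of all minors, indexed by pairs (I,J) with card I = card J >= 1
  (coordinates outside this index set are 0).\<close>
definition minors_vec :: "((real, 'n::{finite,linorder}) vec, 'n) vec \<Rightarrow> 'n set \<times> 'n set \<Rightarrow> real" where
  "minors_vec \<xi> = (\<lambda>(I, J). if card I = card J \<and> I \<noteq> {} then minor \<xi> I J else 0)"

definition level_convex_fun :: "(('a \<Rightarrow> real) \<Rightarrow> real) \<Rightarrow> bool" where
  "level_convex_fun h \<longleftrightarrow>
     (\<forall>s t l. 0 \<le> l \<and> l \<le> 1 \<longrightarrow>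
        h (\<lambda>k. l * s k + (1 - l) * t k) \<le> max (h s) (h t))"

definition polyquasiconvex :: "(((real, 'n::{finite,linorder}) vec, 'n) vec \<Rightarrow> real) \<Rightarrow> bool" where
  "polyquasiconvex f \<longleftrightarrow>
     (\<exists>h :: ('n set \<times> 'n set \<Rightarrow> real) \<Rightarrow> real.
        level_convex_fun h \<and> (\<forall>\<xi>. f \<xi> = h (minors_vec \<xi>)))"

end

theory Submission
  imports Defs
begin


definition cmpz :: "'a::linorder \<Rightarrow> 'a \<Rightarrow> int" where
  "cmpz x y = (if x < y then 1 else -1)"

definition Sg :: "('a::{finite,linorder} \<Rightarrow> 'a) \<Rightarrow> int" where
  "Sg \<sigma> = (\<Prod>p\<in>{(i,j). i < j}. cmpz (\<sigma> (fst p)) (\<sigma> (snd p)))"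

lemma prod_sign_card:
  assumes "finite A"
  shows "(\<Prod>x\<in>A. if Q x then -1 else 1) = (-1::int) ^ card {x\<in>A. Q x}"
proof -
  have "(\<Prod>x\<in>A. if Q x then -1 else 1) = (\<Prod>x\<in>A \<inter> {x. Q x}. (-1::int)) * (\<Prod>x\<in>A \<inter> - {x. Q x}. 1)"
    by (rule prod.If_cases[OF assms])
  also have "\<dots> = (-1) ^ card (A \<inter> {x. Q x})" by simp
  finally show ?thesis by (simp add: Int_def conj_commute)
qed

lemma inv_Sg:
  fixes \<sigma> :: "'a::{finite,linorder} \<Rightarrow> 'a"
  assumes "inj \<sigma>"
  shows "(-1::int) ^ inversions \<sigma> UNIV = Sg \<sigma>"
proof -
  have "Sg \<sigma> = (\<Prod>p\<in>{(i,j). i < j}. if \<sigma> (snd p) < \<sigma> (fst p) then -1 else (1::int))"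
    unfolding Sg_def
  proof (rule prod.cong)
    fix p :: "'a \<times> 'a" assume "p \<in> {(i,j). i < j}"
    then have "fst p < snd p" by (cases p) simp
    then have "\<sigma> (fst p) \<noteq> \<sigma> (snd p)" using assms by (metis injD less_irrefl)
    then show "cmpz (\<sigma> (fst p)) (\<sigma> (snd p)) = (if \<sigma> (snd p) < \<sigma> (fst p) then -1 else 1)"
      by (auto simp: cmpz_def)
  qed simp
  also have "\<dots> = (-1) ^ card {p\<in>{(i,j). i < j}. \<sigma> (snd p) < \<sigma> (fst p)}"
    by (rule prod_sign_card) simp
  also have "{p\<in>{(i,j). i < j}. \<sigma> (snd p) < \<sigma> (fst p)} = {(i, i'). i \<in> UNIV \<and> i' \<in> UNIV \<and> i < i' \<and> \<sigma> i' < \<sigma> i}"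
    by auto
  finally show ?thesis unfolding inversions_def by simp
qed

lemma Sg_comp:
  fixes \<sigma> \<tau> :: "'a::{finite,linorder} \<Rightarrow> 'a"
  assumes "inj \<sigma>" "bij \<tau>"
  shows "Sg (\<sigma> \<circ> \<tau>) = Sg \<sigma> * Sg \<tau>"
proof -
  define P where "P = {(i::'a,j). i < j}"
  define F where "F = (\<lambda>x y. cmpz (\<sigma> x) (\<sigma> y) * cmpz x y)"
  define m where "m = (\<lambda>p. (min (\<tau> (fst p)) (\<tau> (snd p)), max (\<tau> (fst p)) (\<tau> (snd p))))"
  have injt: "inj \<tau>" using assms(2) bij_is_inj by blast
  have Fsym: "F x y = F y x" if "x \<noteq> y" for x y
  proof -
    have "\<sigma> x \<noteq> \<sigma> y" using that assms(1) by (metis injD)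
    then show ?thesis using that unfolding F_def cmpz_def by auto
  qed
  have cmp_sq: "cmpz x y * cmpz x y = 1" for x y :: 'a by (simp add: cmpz_def)
  have step1: "cmpz (\<sigma> (\<tau> i)) (\<sigma> (\<tau> j)) = F (\<tau> i) (\<tau> j) * cmpz (\<tau> i) (\<tau> j)" for i j
    unfolding F_def by (simp add: mult.assoc cmp_sq)
  have "Sg (\<sigma> \<circ> \<tau>) = (\<Prod>p\<in>P. F (\<tau> (fst p)) (\<tau> (snd p)) * cmpz (\<tau> (fst p)) (\<tau> (snd p)))"
    unfolding Sg_def P_def by (simp add: step1)
  also have "\<dots> = (\<Prod>p\<in>P. F (\<tau> (fst p)) (\<tau> (snd p))) * Sg \<tau>"
    unfolding Sg_def P_def by (simp add: prod.distrib)
  also have "(\<Prod>p\<in>P. F (\<tau> (fst p)) (\<tau> (snd p))) = (\<Prod>p\<in>P. F (fst (m p)) (snd (m p)))"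
  proof (rule prod.cong)
    fix p assume "p \<in> P"
    then have "fst p < snd p" unfolding P_def by (cases p) simp
    then have "\<tau> (fst p) \<noteq> \<tau> (snd p)" using injt by (metis injD less_irrefl)
    then show "F (\<tau> (fst p)) (\<tau> (snd p)) = F (fst (m p)) (snd (m p))"
      unfolding m_def using Fsym by (cases "\<tau> (fst p) < \<tau> (snd p)") (auto simp: min_def max_def)
  qed simp
  also have "\<dots> = (\<Prod>q\<in>P. F (fst q) (snd q))"
  proof (rule prod.reindex_bij_betw)
    show "bij_betw m P P"
    proof (rule bij_betw_imageI)
      show "inj_on m P"
      proof (rule inj_onI)
        fix p q assume p: "p \<in> P" and q: "q \<in> P" and e: "m p = m q"
        have "{\<tau> (fst p), \<tau> (snd p)} = {\<tau> (fst q), \<tau> (snd q)}"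
          using e unfolding m_def by (auto simp: min_def max_def split: if_splits)
        then have "{fst p, snd p} = {fst q, snd q}"
          using injt by (metis (no_types, lifting) image_empty image_insert inj_image_eq_iff)
        then show "p = q" using p q unfolding P_def
          by (cases p; cases q) (auto simp: doubleton_eq_iff)
      qed
      show "m ` P = P"
      proof
        show "m ` P \<subseteq> P"
        proof
          fix x assume "x \<in> m ` P"
          then obtain p where p: "p \<in> P" "x = m p" by blast
          then have "fst p < snd p" unfolding P_def by (cases p) simp
    then have "\<tau> (fst p) \<noteq> \<tau> (snd p)" using injt by (metis injD less_irrefl)
          then show "x \<in> P" using p unfolding m_def P_def by (auto simp: min_def max_def)
        qed
        show "P \<subseteq> m ` P"
        proof
          fix x assume x: "x \<in> P"
          obtain a b where ab: "x = (a,b)" "a < b" using x unfolding P_def by auto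
          define i where "i = inv \<tau> a"
          define j where "j = inv \<tau> b"
          have ti: "\<tau> i = a" "\<tau> j = b" unfolding i_def j_def using assms(2) by (simp_all add: surj_f_inv_f bij_is_surj)
          have "i \<noteq> j" using ti ab(2) by (metis less_irrefl)
          have le: "a \<le> b" "\<not> b \<le> a" using ab(2) by simp_all
          show "x \<in> m ` P"
          proof (cases "i < j")
            case True
            then have "(i,j) \<in> P" unfolding P_def by auto
            moreover have "m (i,j) = x" using ti ab le unfolding m_def by (simp add: min_def max_def)
            ultimately show ?thesis by (intro image_eqI[where x="(i,j)"]) simp_all
          next
            case False
            then have "(j,i) \<in> P" using \<open>i \<noteq> j\<close> unfolding P_def by auto
            moreover have "m (j,i) = x" using ti ab le unfolding m_def by (simp add: min_def max_def)
            ultimately show ?thesis by (intro image_eqI[where x="(j,i)"]) simp_all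
          qed
        qed
      qed
    qed
  qed
  also have "\<dots> = Sg \<sigma>"
    unfolding Sg_def P_def F_def
    by (rule prod.cong) (auto simp: cmpz_def)
  finally show ?thesis by (simp add: comp_def)
qed

lemma Sg_transpose:
  fixes a b :: "'a::{finite,linorder}"
  assumes ab: "a < b"
  shows "Sg (Transposition.transpose a b) = -1"
proof -
  define M where "M = {a<..<b}"
  let ?t = "Transposition.transpose a b"
  have ta: "?t a = b" and tb: "?t b = a" by simp_all
  have tx: "?t x = x" if "x \<noteq> a" "x \<noteq> b" for x using that by simp
  have sub1: "(i, i') \<in> insert (a,b) ((\<lambda>x. (a,x)) ` M \<union> (\<lambda>x. (x,b)) ` M)"
    if ii: "i < i'" "?t i' < ?t i" for i i'
  proof (cases "i = a")
    case True
    show ?thesis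
    proof (cases "i' = b")
      case True
      then show ?thesis using \<open>i = a\<close> by simp
    next
      case False
      have "i' \<noteq> a" using ii(1) True by simp
      then have "?t i' = i'" using False tx by simp
      then have "i' < b" using ii(2) True ta by simp
      then have "i' \<in> M" unfolding M_def using ii(1) True by simp
      then show ?thesis using True by blast
    qed
  next
    case nia: False
    show ?thesis
    proof (cases "i = b")
      case True
      have "b < i'" using ii(1) True by simp
      then have "i' \<noteq> a" "i' \<noteq> b" using ab by simp_all
      then have "?t i' = i'" using tx by simp
      then have False using ii(2) True tb \<open>b < i'\<close> ab by simp
      then show ?thesis ..
    next
      case nib: False
      have ti: "?t i = i" using nia nib tx by simp
      show ?thesis
      proof (cases "i' = a")
        case True
        then have False using ii ti ta ab by simp
        then show ?thesis ..
      next
        case nia': False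
        show ?thesis
        proof (cases "i' = b")
          case True
          then have "a < i" using ii(2) ti tb by simp
          then have "i \<in> M" unfolding M_def using ii(1) True by simp
          then show ?thesis using True by blast
        next
          case False
          then have "?t i' = i'" using nia' tx by simp
          then have False using ii ti by simp
          then show ?thesis ..
        qed
      qed
    qed
  qed
  have E: "{(i, i'). i \<in> (UNIV::'a set) \<and> i' \<in> UNIV \<and> i < i' \<and> ?t i' < ?t i}
        = insert (a,b) ((\<lambda>x. (a,x)) ` M \<union> (\<lambda>x. (x,b)) ` M)"
  proof (rule set_eqI)
    fix q :: "'a \<times> 'a"
    obtain i i' where q: "q = (i, i')" by (cases q)
    show "q \<in> {(i, i'). i \<in> (UNIV::'a set) \<and> i' \<in> UNIV \<and> i < i' \<and> ?t i' < ?t i} \<longleftrightarrow>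
          q \<in> insert (a,b) ((\<lambda>x. (a,x)) ` M \<union> (\<lambda>x. (x,b)) ` M)"
    proof
      assume "q \<in> {(i, i'). i \<in> (UNIV::'a set) \<and> i' \<in> UNIV \<and> i < i' \<and> ?t i' < ?t i}"
      then have "i < i'" "?t i' < ?t i" using q by simp_all
      then show "q \<in> insert (a,b) ((\<lambda>x. (a,x)) ` M \<union> (\<lambda>x. (x,b)) ` M)" using sub1 q by simp
    next
      assume "q \<in> insert (a,b) ((\<lambda>x. (a,x)) ` M \<union> (\<lambda>x. (x,b)) ` M)"
      then consider "q = (a,b)" | x where "x \<in> M" "q = (a,x)" | x where "x \<in> M" "q = (x,b)" by blast
      then show "q \<in> {(i, i'). i \<in> (UNIV::'a set) \<and> i' \<in> UNIV \<and> i < i' \<and> ?t i' < ?t i}"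
      proof cases
        case 1 then show ?thesis using ab ta tb by simp
      next
        case (2 x)
        then have "a < x" "x < b" unfolding M_def by simp_all
        then have "?t x = x" using tx by simp
        then show ?thesis using 2 \<open>a < x\<close> \<open>x < b\<close> ta by simp
      next
        case (3 x)
        then have "a < x" "x < b" unfolding M_def by simp_all
        then have "?t x = x" using tx by simp
        then show ?thesis using 3 \<open>a < x\<close> \<open>x < b\<close> tb by simp
      qed
    qed
  qed
  have fin: "finite M" by simp
  have c1: "card ((\<lambda>x. (a,x)) ` M) = card M" by (rule card_image) (simp add: inj_on_def)
  have c2: "card ((\<lambda>x. (x,b)) ` M) = card M" by (rule card_image) (simp add: inj_on_def)
  have d: "(\<lambda>x. (a,x)) ` M \<inter> (\<lambda>x. (x,b)) ` M = {}" unfolding M_def by (auto simp: less_imp_neq)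
  have "card ((\<lambda>x. (a,x)) ` M \<union> (\<lambda>x. (x,b)) ` M) = card M + card M"
    using card_Un_disjoint[OF _ _ d] c1 c2 fin by simp
  moreover have "(a,b) \<notin> (\<lambda>x. (a,x)) ` M \<union> (\<lambda>x. (x,b)) ` M" unfolding M_def by auto
  ultimately have "inversions (Transposition.transpose a b) UNIV = Suc (2 * card M)"
    unfolding inversions_def E using fin by simp
  then have "(-1::int) ^ inversions (Transposition.transpose a b) UNIV = -1" by simp
  moreover have "inj (Transposition.transpose a b)" by simp
  ultimately show ?thesis using inv_Sg by metis
qed

lemma Sg_transpose':
  fixes a b :: "'a::{finite,linorder}"
  assumes "a \<noteq> b" shows "Sg (Transposition.transpose a b) = -1"
proof (cases "a < b")
  case True
  then show ?thesis by (rule Sg_transpose)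
next
  case False
  then have "b < a" using assms by simp
  have "Transposition.transpose a b = Transposition.transpose b a" by (rule transpose_commute)
  then show ?thesis using Sg_transpose[OF \<open>b < a\<close>] by simp
qed

lemma Sg_swapidseq: "swapidseq n p \<Longrightarrow> Sg p = (-1) ^ n"
proof (induction rule: swapidseq.induct)
  case id
  have "Sg (\<lambda>x. x) = 1" unfolding Sg_def by (rule prod.neutral) (simp add: cmpz_def case_prod_beta)
  then show ?case by simp
next
  case (comp_Suc n p a b)
  have "bij p" using comp_Suc(1) permutation_bijective permutation_def by blast
  then have "Sg (Transposition.transpose a b \<circ> p) = Sg (Transposition.transpose a b) * Sg p"
    by (intro Sg_comp) simp_all
  moreover have "Sg (Transposition.transpose a b) = -1" using comp_Suc(2) by (rule Sg_transpose')
  ultimately show ?case using comp_Suc(3) by (simp add: comp_def)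
qed

lemma Sg_sign:
  fixes p :: "'a::{finite,linorder} \<Rightarrow> 'a"
  assumes "permutation p" shows "Sg p = sign p"
proof -
  obtain n where n: "swapidseq n p" using assms permutation_def by blast
  then have "evenperm p = even n" by (rule evenperm_unique) simp
  then show ?thesis using Sg_swapidseq[OF n] by (simp add: sign_def)
qed

lemma ext_univ: "(\<sigma>::'n::{finite,linorder} \<Rightarrow> 'n) \<in> extensional UNIV" by simp

lemma bij_perm_univ: fixes \<sigma> :: "'n::{finite,linorder} \<Rightarrow> 'n" shows "bij_betw \<sigma> (UNIV::'n set) UNIV \<longleftrightarrow> \<sigma> permutes UNIV"
  using permutes_imp_bij[of \<sigma> UNIV] bij_imp_permutes[of \<sigma> UNIV] by blast

lemma minor_det:
  fixes \<xi> :: "((real, 'n::{finite,linorder}) vec, 'n) vec"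
  shows "minor \<xi> UNIV UNIV = det \<xi>"
proof -
  have S: "{\<sigma>. bij_betw \<sigma> (UNIV::'n set) UNIV \<and> \<sigma> \<in> extensional UNIV} = {p. p permutes UNIV}"
    by (simp only: ext_univ bij_perm_univ simp_thms)
  show ?thesis
    unfolding minor_def det_def S
  proof (rule sum.cong[OF refl])
    fix p :: "'n \<Rightarrow> 'n" assume "p \<in> {p. p permutes UNIV}"
    then have pu: "p permutes UNIV" by simp
    have pp: "permutation p" by (rule permutes_imp_permutation[OF finite pu])
    have ip: "inj p" by (rule bij_is_inj[OF permutation_bijective[OF pp]])
    have e: "(-1::int) ^ inversions p UNIV = sign p"
      using inv_Sg[OF ip] Sg_sign[OF pp] by (rule trans)
    have "(-1::real) ^ inversions p UNIV = of_int ((-1::int) ^ inversions p UNIV)" by simp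
    also have "\<dots> = of_int (sign p)" by (simp only: e)
    finally show "(- 1) ^ inversions p UNIV * (\<Prod>i\<in>UNIV. \<xi> $ i $ p i) = of_int (sign p) * (\<Prod>i\<in>UNIV. \<xi> $ i $ p i)"
      by (simp only:)
  qed
qed



definition rho :: "real \<Rightarrow> real \<Rightarrow> real \<Rightarrow> real" where
  "rho a b z = max (a * z) (- (b * z))"

definition psi :: "real \<Rightarrow> real \<Rightarrow> real \<Rightarrow> real" where
  "psi a b y = Inf (range (\<lambda>j::int. rho a b (y - of_int j)))"

lemma rho_nonneg: assumes "0 \<le> a" "0 \<le> b" shows "0 \<le> rho a b z"
proof (cases "0 \<le> z")
  case True
  then have "0 \<le> a * z" using assms by simp
  then show ?thesis unfolding rho_def by simp
next
  case False
  then have "0 \<le> - (b * z)" using assms by (simp add: mult_nonneg_nonpos)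
  then show ?thesis unfolding rho_def by simp
qed

lemma rho_lip: assumes "0 \<le> a" "0 \<le> b" shows "rho a b z \<le> rho a b w + (a + b) * \<bar>z - w\<bar>"
proof -
  have h1: "a * (z - w) \<le> a * \<bar>z - w\<bar>" using assms by (simp add: mult_left_mono)
  have h2: "b * (w - z) \<le> b * \<bar>z - w\<bar>" using assms by (simp add: mult_left_mono)
  have h3: "a * \<bar>z - w\<bar> \<le> (a + b) * \<bar>z - w\<bar>" using assms by (simp add: mult_right_mono)
  have h4: "b * \<bar>z - w\<bar> \<le> (a + b) * \<bar>z - w\<bar>" using assms by (simp add: mult_right_mono)
  have r1: "a * w \<le> rho a b w" and r2: "- (b * w) \<le> rho a b w" unfolding rho_def by simp_all
  have e1: "a * z = a * w + a * (z - w)" and e2: "- (b * z) = - (b * w) + b * (w - z)" by (simp_all add: algebra_simps)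
  have "a * w + a * (z - w) \<le> rho a b w + (a + b) * \<bar>z - w\<bar>"
    by (rule add_mono[OF r1 order_trans[OF h1 h3]])
  then have "a * z \<le> rho a b w + (a + b) * \<bar>z - w\<bar>" by (simp only: e1)
  moreover have "- (b * w) + b * (w - z) \<le> rho a b w + (a + b) * \<bar>z - w\<bar>"
    by (rule add_mono[OF r2 order_trans[OF h2 h4]])
  then have "- (b * z) \<le> rho a b w + (a + b) * \<bar>z - w\<bar>" by (simp only: e2)
  ultimately have "max (a * z) (- (b * z)) \<le> rho a b w + (a + b) * \<bar>z - w\<bar>" by simp
  then show ?thesis unfolding rho_def .
qed

lemma psi_bdd: assumes "0 \<le> a" "0 \<le> b" shows "bdd_below (range (\<lambda>j::int. rho a b (y - of_int j)))"
  using rho_nonneg[OF assms] by (intro bdd_belowI[where m=0]) auto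

lemma psi_le: assumes "0 \<le> a" "0 \<le> b" shows "psi a b y \<le> rho a b (y - of_int j)"
  unfolding psi_def by (rule cInf_lower[OF _ psi_bdd[OF assms]]) simp

lemma psi_ge: assumes "\<And>j::int. c \<le> rho a b (y - of_int j)" shows "c \<le> psi a b y"
  unfolding psi_def by (rule cInf_greatest) (use assms in auto)

lemma psi_nonneg: assumes "0 \<le> a" "0 \<le> b" shows "0 \<le> psi a b y"
  by (rule psi_ge) (rule rho_nonneg[OF assms])

lemma psi_lip: assumes "0 \<le> a" "0 \<le> b" shows "psi a b x \<le> psi a b y + (a + b) * \<bar>x - y\<bar>"
proof -
  have "psi a b x - (a + b) * \<bar>x - y\<bar> \<le> psi a b y"
  proof (rule psi_ge)
    fix j :: int
    have "psi a b x \<le> rho a b (x - of_int j)" by (rule psi_le[OF assms])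
    also have "\<dots> \<le> rho a b (y - of_int j) + (a + b) * \<bar>(x - of_int j) - (y - of_int j)\<bar>"
      by (rule rho_lip[OF assms])
    finally show "psi a b x - (a + b) * \<bar>x - y\<bar> \<le> rho a b (y - of_int j)" by simp
  qed
  then show ?thesis by simp
qed

lemma psi_eq1:
  assumes a: "0 < a" and b: "0 < b" and l: "a * l = b * (1 - l)" and f: "frac y \<le> l"
  shows "psi a b y = a * frac y"
proof (rule antisym)
  have f0: "0 \<le> frac y" by (rule frac_ge_0)
  have "psi a b y \<le> rho a b (y - of_int \<lfloor>y\<rfloor>)" using a b by (intro psi_le) simp_all
  also have "y - of_int \<lfloor>y\<rfloor> = frac y" by (simp add: frac_def)
  also have "rho a b (frac y) = a * frac y"
  proof -
    have "- (b * frac y) \<le> 0" using b f0 by simp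
    moreover have "0 \<le> a * frac y" using a f0 by simp
    ultimately show ?thesis unfolding rho_def by simp
  qed
  finally show "psi a b y \<le> a * frac y" .
  show "a * frac y \<le> psi a b y"
  proof (rule psi_ge)
    fix j :: int
    show "a * frac y \<le> rho a b (y - of_int j)"
    proof (cases "j \<le> \<lfloor>y\<rfloor>")
      case True
      then have "of_int j \<le> (of_int \<lfloor>y\<rfloor> :: real)" by simp
      then have "frac y \<le> y - of_int j" by (simp add: frac_def)
      then have "a * frac y \<le> a * (y - of_int j)" using a by (simp add: mult_left_mono)
      then show ?thesis unfolding rho_def by simp
    next
      case False
      then have "\<lfloor>y\<rfloor> + 1 \<le> j" by simp
      then have "of_int \<lfloor>y\<rfloor> + 1 \<le> (of_int j :: real)" by (metis of_int_add of_int_le_iff of_int_1)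
      then have "1 - l \<le> of_int j - y" using f by (simp add: frac_def)
      then have "b * (1 - l) \<le> b * (of_int j - y)" using b by (simp add: mult_left_mono)
      moreover have "a * frac y \<le> a * l" using a f by (simp add: mult_left_mono)
      moreover have "b * (of_int j - y) = - (b * (y - of_int j))" by (simp add: algebra_simps)
      ultimately have "a * frac y \<le> - (b * (y - of_int j))" using l by linarith
      then show ?thesis unfolding rho_def by simp
    qed
  qed
qed

lemma psi_eq2:
  assumes a: "0 < a" and b: "0 < b" and l: "a * l = b * (1 - l)" and f: "l \<le> frac y"
  shows "psi a b y = b * (1 - frac y)"
proof (rule antisym)
  have f1: "frac y < 1" by (rule frac_lt_1)
  have "psi a b y \<le> rho a b (y - of_int (\<lfloor>y\<rfloor> + 1))" using a b by (intro psi_le) simp_all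
  also have "y - of_int (\<lfloor>y\<rfloor> + 1) = frac y - 1" by (simp add: frac_def)
  also have "rho a b (frac y - 1) = b * (1 - frac y)"
  proof -
    have "a * (frac y - 1) \<le> 0" using a f1 by (simp add: mult_nonneg_nonpos)
    moreover have "0 \<le> b * (1 - frac y)" using b f1 by simp
    moreover have "- (b * (frac y - 1)) = b * (1 - frac y)" by (simp add: algebra_simps)
    ultimately show ?thesis unfolding rho_def by simp
  qed
  finally show "psi a b y \<le> b * (1 - frac y)" .
  show "b * (1 - frac y) \<le> psi a b y"
  proof (rule psi_ge)
    fix j :: int
    show "b * (1 - frac y) \<le> rho a b (y - of_int j)"
    proof (cases "j \<le> \<lfloor>y\<rfloor>")
      case True
      then have "of_int j \<le> (of_int \<lfloor>y\<rfloor> :: real)" by simp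
      then have "frac y \<le> y - of_int j" by (simp add: frac_def)
      then have "l \<le> y - of_int j" using f by simp
      then have "a * l \<le> a * (y - of_int j)" using a by (simp add: mult_left_mono)
      moreover have "b * (1 - frac y) \<le> b * (1 - l)" using b f by (simp add: mult_left_mono)
      ultimately have "b * (1 - frac y) \<le> a * (y - of_int j)" using l by linarith
      then show ?thesis unfolding rho_def by simp
    next
      case False
      then have "\<lfloor>y\<rfloor> + 1 \<le> j" by simp
      then have "of_int \<lfloor>y\<rfloor> + 1 \<le> (of_int j :: real)" by (metis of_int_add of_int_le_iff of_int_1)
      then have "1 - frac y \<le> of_int j - y" by (simp add: frac_def)
      then have "b * (1 - frac y) \<le> b * (of_int j - y)" using b by (simp add: mult_left_mono)
      moreover have "b * (of_int j - y) = - (b * (y - of_int j))" by (simp add: algebra_simps)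
      ultimately have "b * (1 - frac y) \<le> - (b * (y - of_int j))" by linarith
      then show ?thesis unfolding rho_def by simp
    qed
  qed
qed

lemma psi_formula:
  assumes a: "0 < a" and b: "0 < b" and l: "a * l = b * (1 - l)"
  shows "psi a b y = (if frac y \<le> l then a * frac y else b * (1 - frac y))"
  using psi_eq1[OF a b l] psi_eq2[OF a b l] by simp

lemma psi_periodic:
  assumes a: "0 < a" and b: "0 < b" and l: "a * l = b * (1 - l)"
  shows "psi a b (y + 1) = psi a b y"
  using psi_formula[OF a b l] by (simp add: frac_1_eq)

lemma psi_bound:
  assumes a: "0 < a" and b: "0 < b" and l: "a * l = b * (1 - l)"
  shows "\<bar>psi a b y\<bar> \<le> a + b"
proof -
  have f0: "0 \<le> frac y" and f1: "frac y < 1" by (rule frac_ge_0, rule frac_lt_1)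
  have h1: "a * frac y \<le> a" using a f1 by (simp add: mult_left_le)
  have h2: "b * (1 - frac y) \<le> b" using b f0 by (simp add: mult_left_le)
  have n: "0 \<le> psi a b y" using a b by (intro psi_nonneg) simp_all
  have "psi a b y \<le> a + b"
  proof (cases "frac y \<le> l")
    case True
    then have "psi a b y = a * frac y" by (rule psi_eq1[OF a b l])
    then show ?thesis using h1 b by linarith
  next
    case False
    then have "psi a b y = b * (1 - frac y)" by (intro psi_eq2[OF a b l]) simp
    then show ?thesis using h2 a by linarith
  qed
  then show ?thesis using n by simp
qed



lemma axis_scale: "axis k (c::real) = c *\<^sub>R axis k 1"
  by (simp add: vec_eq_iff axis_def)

lemma norm_axis_real: "norm (axis k (c::real)) = \<bar>c\<bar>"
  by (subst axis_scale) simp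

lemma axis_diff': "axis k (c::real) - axis k d = axis k (c - d)"
  by (simp add: vec_eq_iff axis_def)

definition uu :: "'n::finite \<Rightarrow> real \<Rightarrow> real \<Rightarrow> real^'n \<Rightarrow> real^'n" where
  "uu k a b x = axis k (- psi a b (x $ k))"

lemma uu_W1:
  fixes k :: "'n::finite"
  assumes a: "0 < a" and b: "0 < b" and l: "a * l = b * (1 - l)"
  shows "uu k a b \<in> W1inf_per"
proof -
  have bd: "bounded (range (uu k a b))"
    unfolding bounded_iff
  proof (intro exI ballI)
    fix v assume "v \<in> range (uu k a b)"
    then obtain x where "v = uu k a b x" by blast
    then show "norm v \<le> a + b" using psi_bound[OF a b l, of "x $ k"] by (simp add: uu_def norm_axis_real)
  qed
  have lip: "(a + b)-lipschitz_on UNIV (uu k a b)"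
  proof (rule lipschitz_onI)
    fix x y :: "real^'n"
    have "dist (uu k a b x) (uu k a b y) = \<bar>psi a b (x $ k) - psi a b (y $ k)\<bar>"
      unfolding uu_def dist_norm axis_diff' norm_axis_real by simp
    also have "\<dots> \<le> (a + b) * \<bar>x $ k - y $ k\<bar>"
      using psi_lip[of a b "x $ k" "y $ k"] psi_lip[of a b "y $ k" "x $ k"] a b
      by (simp add: abs_minus_commute)
    also have "\<bar>x $ k - y $ k\<bar> \<le> dist x y"
      using component_le_norm_cart[of "x - y" k] by (simp add: dist_norm)
    then have "(a + b) * \<bar>x $ k - y $ k\<bar> \<le> (a + b) * dist x y" using a b by (simp add: mult_left_mono)
    finally show "dist (uu k a b x) (uu k a b y) \<le> (a + b) * dist x y" .
  next
    show "0 \<le> a + b" using a b by simp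
  qed
  have per: "uu k a b (x + axis i 1) = uu k a b x" for x i
  proof (cases "i = k")
    case True
    then show ?thesis unfolding uu_def using psi_periodic[OF a b l, of "x $ k"] by simp
  next
    case False
    then have "(x + axis i 1) $ k = x $ k" by (simp add: axis_def)
    then show ?thesis unfolding uu_def by simp
  qed
  show ?thesis unfolding W1inf_per_def using bd lip per by blast
qed

lemma Dmat_local:
  fixes u :: "real^'n::finite \<Rightarrow> real^'n"
  assumes S: "open S" "x \<in> S" and eq: "\<And>z. z \<in> S \<Longrightarrow> u z = axis k (m * z $ k + e)"
  shows "Dmat u x = (\<chi> i j. if i = k \<and> j = k then m else 0)"
proof -
  define L where "L = (\<lambda>h::real^'n. axis k (m * h $ k))"
  have lin: "linear L" unfolding L_def
    by (rule linearI) (simp_all add: vec_eq_iff axis_def algebra_simps)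
  have bl: "bounded_linear L" using lin by (simp only: linear_conv_bounded_linear)
  have d0: "(L has_derivative L) (at x)" by (rule bounded_linear_imp_has_derivative[OF bl])
  have d1: "((\<lambda>z. L z + axis k e) has_derivative L) (at x)" by (rule has_derivative_add_const[OF d0])
  have eq2: "L z + axis k e = u z" if "z \<in> S" for z
    using eq[OF that] unfolding L_def by (simp add: vec_eq_iff axis_def)
  have "(u has_derivative L) (at x)"
    by (rule has_derivative_transform_within_open[OF d1 S eq2])
  then have "frechet_derivative u (at x) = L" by (rule frechet_derivative_at[symmetric])
  then show ?thesis unfolding Dmat_def matrix_def L_def
    by (simp add: vec_eq_iff axis_def)
qed



lemma Qcube_box: "(Qcube :: (real^'n::finite) set) = box (\<chi> i. - 1/2) (\<chi> i. 1/2)"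
  unfolding Qcube_def by (simp add: set_eq_iff mem_box_cart)

lemma Basis_cart_axis: "(b :: real^'n::finite) \<in> Basis \<Longrightarrow> \<exists>i. b = axis i 1"
  unfolding Basis_vec_def by auto

lemma emeasure_Qcube: "emeasure lborel (Qcube :: (real^'n::finite) set) = 1"
proof -
  let ?l = "(\<chi> i. - 1/2) :: real^'n" and ?u = "(\<chi> i. 1/2) :: real^'n"
  have 1: "(?u - ?l) \<bullet> b = 1" if bB: "b \<in> Basis" for b
  proof -
    obtain i where "b = axis i 1" using Basis_cart_axis[OF bB] by blast
    then show ?thesis by (simp add: cart_eq_inner_axis[symmetric])
  qed
  have 2: "?l \<bullet> b \<le> ?u \<bullet> b" if bB: "b \<in> Basis" for b
  proof -
    obtain i where "b = axis i 1" using Basis_cart_axis[OF bB] by blast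
    then show ?thesis by (simp add: cart_eq_inner_axis[symmetric])
  qed
  have "(\<Prod>b\<in>Basis. (?u - ?l) \<bullet> b) = (1::real)" by (rule prod.neutral) (use 1 in blast)
  then show ?thesis unfolding Qcube_box emeasure_lborel_box_eq using 2 by simp
qed

lemma Qcube_sets: "(Qcube :: (real^'n::finite) set) \<in> sets lborel"
  unfolding Qcube_box by simp

lemma hyperplane_null:
  fixes k :: "'n::finite"
  shows "{x::real^'n. axis k 1 \<bullet> x = c} \<in> null_sets lborel"
proof -
  have "negligible {x::real^'n. axis k 1 \<bullet> x = c}" by (rule negligible_hyperplane) simp
  then have n: "{x::real^'n. axis k 1 \<bullet> x = c} \<in> null_sets lebesgue" by (simp add: negligible_iff_null_sets)
  have "closed {x::real^'n. axis k 1 \<bullet> x = c}" by (rule closed_hyperplane)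
  then have s: "{x::real^'n. axis k 1 \<bullet> x = c} \<in> sets lborel" by simp
  show ?thesis using n null_sets_completion_iff[OF s] by simp
qed

lemma det_diag_shift:
  fixes k :: "'n::finite"
  shows "det ((\<chi> i j. if i = j then (if i = k then d else 1) else 0) + (\<chi> i j. if i = k \<and> j = k then m else 0) :: real^'n^'n) = d + m"
proof -
  let ?A = "(\<chi> i j. if i = j then (if i = k then d else 1) else 0) + (\<chi> i j. if i = k \<and> j = k then m else 0) :: real^'n^'n"
  have "det ?A = prod (\<lambda>i. ?A$i$i) UNIV" by (rule det_diagonal) auto
  also have "\<dots> = prod (\<lambda>i. if i = k then d + m else 1) UNIV" by (rule prod.cong) simp_all
  also have "\<dots> = d + m" by simp
  finally show ?thesis .
qed



lemma lc_core:
  fixes g :: "real \<Rightarrow> real" and f :: "((real, 'n::finite) vec, 'n) vec \<Rightarrow> real"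
  assumes g_nonneg: "\<forall>t. 0 \<le> g t"
    and f_def: "\<forall>\<xi>. f \<xi> = g (det \<xi>)"
    and qc: "curl_inf_qc f"
    and st: "s < t" and l0: "0 < l" and l1: "l < 1"
  shows "g (l * s + (1 - l) * t) \<le> max (g s) (g t)"
proof -
  define \<delta> where "\<delta> = l * s + (1 - l) * t"
  define a where "a = \<delta> - s"
  define b where "b = t - \<delta>"
  have a_eq: "a = (1 - l) * (t - s)" unfolding a_def \<delta>_def by (simp add: algebra_simps)
  have b_eq: "b = l * (t - s)" unfolding b_def \<delta>_def by (simp add: algebra_simps)
  have a0: "0 < a" unfolding a_eq using st l1 by simp
  have b0: "0 < b" unfolding b_eq using st l0 by simp
  have al: "a * l = b * (1 - l)" unfolding a_eq b_eq by (simp add: algebra_simps)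
  define k :: 'n where "k = undefined"
  define u where "u = uu k a b"
  define \<xi>0 :: "real^'n^'n" where "\<xi>0 = (\<chi> i j. if i = j then (if i = k then \<delta> else 1) else 0)"
  define M where "M = max (g s) (g t)"
  have M0: "0 \<le> M" unfolding M_def using g_nonneg by (simp add: le_max_iff_disj)
  have uW: "u \<in> W1inf_per" unfolding u_def by (rule uu_W1[OF a0 b0 al])
  define C where "C = range (\<lambda>j::int. real_of_int j) \<union> range (\<lambda>j::int. real_of_int j + l)"
  define N where "N = (\<Union>c\<in>C. {x::real^'n. axis k 1 \<bullet> x = c})"
  have Nnull: "N \<in> null_sets lborel"
    unfolding N_def
  proof (rule null_sets_UN')
    show "countable C" unfolding C_def by simp
    show "{x::real^'n. axis k 1 \<bullet> x = c} \<in> null_sets lborel" if "c \<in> C" for c by (rule hyperplane_null)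
  qed
  have shift: "f (\<xi>0 + (\<chi> i j. if i = k \<and> j = k then m else 0)) = g (\<delta> + m)" for m
    unfolding \<xi>0_def f_def[rule_format] det_diag_shift[of k \<delta> m] by (rule refl)
  have good: "f (\<xi>0 + Dmat u x) \<le> M" if xN: "x \<notin> N" for x
  proof -
    define y where "y = x $ k"
    define c where "c = \<lfloor>y\<rfloor>"
    have xk: "axis k 1 \<bullet> x = y" unfolding y_def by (simp add: cart_eq_inner_axis inner_commute)
    have fy: "frac y = y - of_int c" unfolding c_def by (simp add: frac_def)
    have "y \<notin> C" using xN xk unfolding N_def by blast
    then have yi: "y \<noteq> of_int c" and yl: "y \<noteq> of_int c + l" unfolding C_def by blast+
    have c_le: "of_int c \<le> y" unfolding c_def by simp
    have c_lt: "y < of_int c + 1" unfolding c_def by simp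
    show ?thesis
    proof (cases "y < of_int c + l")
      case True
      define S where "S = {z::real^'n. of_int c < z $ k} \<inter> {z. z $ k < of_int c + l}"
      have So: "open S" unfolding S_def
        by (intro open_Int open_halfspace_component_gt_cart open_halfspace_component_lt_cart)
      have xS: "x \<in> S" unfolding S_def using c_le yi True by (simp add: y_def[symmetric])
      have ueq: "u z = axis k ((- a) * z $ k + a * of_int c)" if zS: "z \<in> S" for z
      proof -
        have z1: "of_int c < z $ k" "z $ k < of_int c + l" using zS unfolding S_def by simp_all
        have "\<lfloor>z $ k\<rfloor> = c" by (rule floor_unique) (use z1 l1 in simp_all)
        then have fz: "frac (z $ k) = z $ k - of_int c" by (simp add: frac_def)
        then have "frac (z $ k) \<le> l" using z1 by simp
        then have "psi a b (z $ k) = a * (z $ k - of_int c)" using psi_eq1[OF a0 b0 al] fz by simp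
        then have ps: "- psi a b (z $ k) = (- a) * z $ k + a * of_int c" by (simp add: algebra_simps)
        show ?thesis unfolding u_def uu_def ps by (rule refl)
      qed
      have "Dmat u x = (\<chi> i j. if i = k \<and> j = k then - a else 0)" by (rule Dmat_local[OF So xS ueq])
      then have "f (\<xi>0 + Dmat u x) = g (\<delta> + - a)" using shift by simp
      also have "\<delta> + - a = s" unfolding a_def by simp
      finally show ?thesis unfolding M_def by simp
    next
      case False
      then have yl2: "of_int c + l < y" using yl by simp
      define S where "S = {z::real^'n. of_int c + l < z $ k} \<inter> {z. z $ k < of_int c + 1}"
      have So: "open S" unfolding S_def
        by (intro open_Int open_halfspace_component_gt_cart open_halfspace_component_lt_cart)
      have xS: "x \<in> S" unfolding S_def using yl2 c_lt by (simp add: y_def[symmetric])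
      have ueq: "u z = axis k (b * z $ k + (- (b * (1 + of_int c))))" if zS: "z \<in> S" for z
      proof -
        have z1: "of_int c + l < z $ k" "z $ k < of_int c + 1" using zS unfolding S_def by simp_all
        have "\<lfloor>z $ k\<rfloor> = c" by (rule floor_unique) (use z1 l0 in simp_all)
        then have fz: "frac (z $ k) = z $ k - of_int c" by (simp add: frac_def)
        then have "l \<le> frac (z $ k)" using z1 by simp
        then have "psi a b (z $ k) = b * (1 - (z $ k - of_int c))" using psi_eq2[OF a0 b0 al] fz by simp
        then have ps: "- psi a b (z $ k) = b * z $ k + (- (b * (1 + of_int c)))" by (simp add: algebra_simps)
        show ?thesis unfolding u_def uu_def ps by (rule refl)
      qed
      have "Dmat u x = (\<chi> i j. if i = k \<and> j = k then b else 0)" by (rule Dmat_local[OF So xS ueq])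
      then have "f (\<xi>0 + Dmat u x) = g (\<delta> + b)" using shift by simp
      also have "\<delta> + b = t" unfolding b_def by simp
      finally show ?thesis unfolding M_def by simp
    qed
  qed
  have Lp_le: "Lp_term p f \<xi>0 u \<le> ennreal M" if p0: "0 < p" for p
  proof -
    define I where "I = (\<integral>\<^sup>+ x \<in> Qcube. ennreal (f (\<xi>0 + Dmat u x) powr p) \<partial>lborel)"
    have "I \<le> (\<integral>\<^sup>+ x. ennreal (M powr p) * indicator (Qcube :: (real^'n) set) x \<partial>lborel)"
      unfolding I_def
    proof (rule nn_integral_mono_AE)
      show "AE x in lborel. ennreal (f (\<xi>0 + Dmat u x) powr p) * indicator Qcube x \<le> ennreal (M powr p) * indicator Qcube x"
      proof (rule AE_I'[OF Nnull], rule subsetI)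
        fix x assume "x \<in> {x \<in> space lborel. \<not> ennreal (f (\<xi>0 + Dmat u x) powr p) * indicator Qcube x \<le> ennreal (M powr p) * indicator Qcube x}"
        then have nle: "\<not> ennreal (f (\<xi>0 + Dmat u x) powr p) * indicator Qcube x \<le> ennreal (M powr p) * indicator Qcube x" by simp
        show "x \<in> N"
        proof (rule ccontr)
          assume "x \<notin> N"
          then have le: "f (\<xi>0 + Dmat u x) \<le> M" by (rule good)
          have f0: "0 \<le> f (\<xi>0 + Dmat u x)" using f_def g_nonneg by simp
          have "f (\<xi>0 + Dmat u x) powr p \<le> M powr p" using le f0 p0 by (intro powr_mono2) simp_all
          then have "ennreal (f (\<xi>0 + Dmat u x) powr p) \<le> ennreal (M powr p)" by (rule ennreal_leI)
          then have "ennreal (f (\<xi>0 + Dmat u x) powr p) * indicator Qcube x \<le> ennreal (M powr p) * indicator Qcube x"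
            by (rule mult_right_mono) simp
          then show False using nle by simp
        qed
      qed
    qed
    also have "\<dots> = ennreal (M powr p) * emeasure lborel (Qcube :: (real^'n) set)"
      by (rule nn_integral_cmult_indicator[OF Qcube_sets])
    also have "\<dots> = ennreal (M powr p)" unfolding emeasure_Qcube by simp
    finally have Ile: "I \<le> ennreal (M powr p)" .
    have "I < \<infinity>" by (rule le_less_trans[OF Ile]) simp
    then have Ifin: "I \<noteq> \<infinity>" by simp
    have "enn2real I \<le> enn2real (ennreal (M powr p))" by (rule enn2real_mono[OF Ile]) simp
    then have e1: "enn2real I \<le> M powr p" by simp
    have "enn2real I powr (1 / p) \<le> (M powr p) powr (1 / p)"
      by (rule powr_mono2) (use e1 p0 in simp_all)
    also have "(M powr p) powr (1 / p) = M" using p0 M0 by (simp add: powr_powr powr_one)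
    finally have "enn2real I powr (1 / p) \<le> M" .
    then have "ennreal (enn2real I powr (1 / p)) \<le> ennreal M" by (rule ennreal_leI)
    then show ?thesis unfolding Lp_term_def Let_def I_def[symmetric] using Ifin by simp
  qed
  have lim: "((\<lambda>p. INF v \<in> W1inf_per. Lp_term p f \<xi>0 v) \<longlongrightarrow> ennreal (f \<xi>0)) at_top"
    using qc unfolding curl_inf_qc_def by blast
  have ev: "eventually (\<lambda>p. (INF v \<in> W1inf_per. Lp_term p f \<xi>0 v) \<le> ennreal M) at_top"
    using eventually_gt_at_top[of "0::real"]
  proof (rule eventually_mono)
    fix p :: real assume "0 < p"
    have "(INF v \<in> W1inf_per. Lp_term p f \<xi>0 v) \<le> Lp_term p f \<xi>0 u" by (rule INF_lower[OF uW])
    also have "\<dots> \<le> ennreal M" by (rule Lp_le[OF \<open>0 < p\<close>])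
    finally show "(INF v \<in> W1inf_per. Lp_term p f \<xi>0 v) \<le> ennreal M" .
  qed
  have "ennreal (f \<xi>0) \<le> ennreal M" by (rule tendsto_upperbound[OF lim ev]) simp
  then have "f \<xi>0 \<le> M" using M0 by simp
  moreover have "f \<xi>0 = g \<delta>"
  proof -
    have z: "(\<chi> i j. if i = k \<and> j = k then (0::real) else 0) = (0::real^'n^'n)" by (simp add: vec_eq_iff)
    show ?thesis using shift[of 0] unfolding z by simp
  qed
  ultimately show ?thesis unfolding \<delta>_def M_def by simp
qed


lemma level_convex_g:
  fixes g :: "real \<Rightarrow> real" and f :: "((real, 'n::finite) vec, 'n) vec \<Rightarrow> real"
  assumes g_nonneg: "\<forall>t. 0 \<le> g t"
    and f_def: "\<forall>\<xi>. f \<xi> = g (det \<xi>)"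
    and qc: "curl_inf_qc f"
  shows "level_convex_real g"
  unfolding level_convex_real_def
proof (intro allI impI)
  fix s t l :: real assume l: "0 \<le> l \<and> l \<le> 1"
  show "g (l * s + (1 - l) * t) \<le> max (g s) (g t)"
  proof (cases "l = 0 \<or> l = 1 \<or> s = t")
    case True
    then show ?thesis by (auto simp: algebra_simps)
  next
    case False
    then have l0: "0 < l" and l1: "l < 1" and st: "s \<noteq> t" using l by auto
    show ?thesis
    proof (cases "s < t")
      case True
      show ?thesis by (rule lc_core[OF g_nonneg f_def qc True l0 l1])
    next
      case False
      then have ts: "t < s" using st by simp
      have "g ((1 - l) * t + (1 - (1 - l)) * s) \<le> max (g t) (g s)"
        by (rule lc_core[OF g_nonneg f_def qc ts]) (use l0 l1 in simp_all)
      then show ?thesis by (simp add: algebra_simps max.commute)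
    qed
  qed
qed

theorem mainTheorem14:
  fixes g :: "real \<Rightarrow> real" and f :: "((real, 'n::{finite,linorder}) vec, 'n) vec \<Rightarrow> real"
    and a1 a2 :: real
  assumes g_nonneg: "\<forall>t. 0 \<le> g t"
    and g_lsc: "lsc g"
    and a1_pos: "a1 > 0"
    and growth: "\<forall>\<delta>. g \<delta> \<ge> a1 * \<bar>\<delta>\<bar> + a2"
    and f_def: "\<forall>\<xi>. f \<xi> = g (det \<xi>)"
    and qc: "curl_inf_qc f"
  shows "level_convex_real g \<and> polyquasiconvex f"
proof
  show lc: "level_convex_real g" by (rule level_convex_g[OF g_nonneg f_def qc])
  define h :: "('n set \<times> 'n set \<Rightarrow> real) \<Rightarrow> real" where "h = (\<lambda>v. g (v (UNIV, UNIV)))"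
  have "level_convex_fun h"
    unfolding level_convex_fun_def h_def using lc unfolding level_convex_real_def by simp
  moreover have "f \<xi> = h (minors_vec \<xi>)" for \<xi>
  proof -
    have "minors_vec \<xi> (UNIV, UNIV) = minor \<xi> UNIV UNIV" unfolding minors_vec_def by simp
    also have "\<dots> = det \<xi>" by (rule minor_det)
    finally show ?thesis unfolding h_def using f_def by simp
  qed
  ultimately show "polyquasiconvex f" unfolding polyquasiconvex_def by blast
qed

end
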